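(* Let $K$ be an algebraically closed field and $\varphi:V\to V$ a $K$-linear map of a finite dimensional $K$-vector space $V$. Let $\{\lambda_1,\dots,\lambda_p\}\subseteq K$ be the set of all ($p$ distinct) eigenvalues of $\varphi$ and $m=\max\{\dim(\ker(\varphi-\lambda_i1_V))\mid1\le i\le p\}$. Then the centralizer $C_\varphi=\{\psi\in\mathrm{Hom}_K(V,V)\mid\psi\circ\varphi=\varphi\circ\psi\}$ satisfies all polynomial identities of the full matrix algebra $M_{m\times m}(K[t])$.
   Context: $K[t]$ is the polynomial ring over $K$ in one indeterminate. *)

theory Defs
  imports "Jordan_Normal_Form.Jordan_Normal_Form_Uniqueness"
begin

text \<open>Noncommutative polynomials over K in the variables x_0, x_1, ... (elements of the
free associative K-algebra), represented by expressions. Two expressions denoting the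
same element of the free algebra evaluate identically in every K-algebra, so the set of
expressions vanishing identically on an algebra determines its T-ideal of identities.\<close>

datatype 'a ncpoly =
    NVar nat
  | NConst 'a
  | NAdd "'a ncpoly" "'a ncpoly"
  | NSub "'a ncpoly" "'a ncpoly"
  | NMul "'a ncpoly" "'a ncpoly"

text \<open>Evaluation in the algebra of d x d matrices over a ring 'b which is a K-algebra
via the scalar embedding emb; constants c act as emb c times the identity matrix.\<close>

fun eval_ncpoly :: "nat \<Rightarrow> ('a \<Rightarrow> 'b::comm_ring_1) \<Rightarrow> (nat \<Rightarrow> 'b mat) \<Rightarrow> 'a ncpoly \<Rightarrow> 'b mat" where
  "eval_ncpoly d emb \<rho> (NVar i) = \<rho> i"
| "eval_ncpoly d emb \<rho> (NConst c) = emb c \<cdot>\<^sub>m 1\<^sub>m d"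
| "eval_ncpoly d emb \<rho> (NAdd p q) = eval_ncpoly d emb \<rho> p + eval_ncpoly d emb \<rho> q"
| "eval_ncpoly d emb \<rho> (NSub p q) = eval_ncpoly d emb \<rho> p - eval_ncpoly d emb \<rho> q"
| "eval_ncpoly d emb \<rho> (NMul p q) = eval_ncpoly d emb \<rho> p * eval_ncpoly d emb \<rho> q"

definition is_PI :: "nat \<Rightarrow> ('a \<Rightarrow> 'b::comm_ring_1) \<Rightarrow> 'b mat set \<Rightarrow> 'a ncpoly \<Rightarrow> bool" where
  "is_PI d emb S f \<longleftrightarrow> (\<forall>\<rho>. (\<forall>i. \<rho> i \<in> S) \<longrightarrow> eval_ncpoly d emb \<rho> f = 0\<^sub>m d d)"

definition centralizer :: "nat \<Rightarrow> 'a::comm_ring_1 mat \<Rightarrow> 'a mat set" where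
  "centralizer n A = {\<psi> \<in> carrier_mat n n. \<psi> * A = A * \<psi>}"

end

theory Submission
  imports Defs "Jordan_Normal_Form.Jordan_Normal_Form_Existence"
begin


fun pev :: "'a::comm_ring_1 mat \<Rightarrow> 'a list \<Rightarrow> 'a vec \<Rightarrow> 'a vec" where
  "pev A [] v = 0\<^sub>v (dim_vec v)"
| "pev A (a # as) v = a \<cdot>\<^sub>v v + A *\<^sub>v pev A as v"

definition peval :: "'a::comm_ring_1 mat \<Rightarrow> 'a poly \<Rightarrow> 'a vec \<Rightarrow> 'a vec" where
  "peval A p v = pev A (coeffs p) v"

lemma pev_carrier: "A \<in> carrier_mat n n \<Longrightarrow> v \<in> carrier_vec n \<Longrightarrow> pev A xs v \<in> carrier_vec n"
  by (induct xs) auto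

lemma peval_carrier[simp]: "A \<in> carrier_mat n n \<Longrightarrow> v \<in> carrier_vec n \<Longrightarrow> peval A p v \<in> carrier_vec n"
  unfolding peval_def by (rule pev_carrier)

lemma peval_0[simp]: "v \<in> carrier_vec n \<Longrightarrow> peval A 0 v = 0\<^sub>v n"
  unfolding peval_def by auto

lemma peval_pCons: assumes A: "A \<in> carrier_mat n n" and v: "v \<in> carrier_vec n"
  shows "peval A (pCons a p) v = a \<cdot>\<^sub>v v + A *\<^sub>v peval A p v"
proof (cases "p = 0 \<and> a = 0")
  case True
  then show ?thesis using A v by (auto simp: peval_def)
next
  case False
  then have "coeffs (pCons a p) = a # coeffs p"
    by (auto simp: cCons_def)
  then show ?thesis by (simp add: peval_def)
qed



lemma mult_mat_vec_zero[simp]: "A \<in> carrier_mat n n \<Longrightarrow> A *\<^sub>v 0\<^sub>v n = 0\<^sub>v n"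
  by (rule eq_vecI, auto)

lemma mmv_smult: fixes A :: "'a :: comm_ring_1 mat" assumes A: "A \<in> carrier_mat n n" and v: "v \<in> carrier_vec n"
  shows "A *\<^sub>v (k \<cdot>\<^sub>v v) = k \<cdot>\<^sub>v (A *\<^sub>v v)"
proof (rule eq_vecI)
  fix i assume "i < dim_vec (k \<cdot>\<^sub>v (A *\<^sub>v v))"
  hence i: "i < n" using A by auto
  have r: "row A i \<in> carrier_vec n" using A i by auto
  show "(A *\<^sub>v (k \<cdot>\<^sub>v v)) $ i = (k \<cdot>\<^sub>v (A *\<^sub>v v)) $ i"
    using i A v r by (simp add: scalar_prod_smult_right[of "row A i" v])
qed (insert A, auto)

lemma peval_add: assumes A: "A \<in> carrier_mat n n" and v: "v \<in> carrier_vec n"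
  shows "peval A (p + q) v = peval A p v + peval A q v"
proof (induct p q rule: poly_induct2)
  show "peval A (0 + 0) v = peval A 0 v + peval A 0 v" using v by (auto intro!: eq_vecI)
next
  fix a p b q assume IH: "peval A (p + q) v = peval A p v + peval A q v"
  have "peval A (pCons a p + pCons b q) v = peval A (pCons (a+b) (p+q)) v" by simp
  also have "\<dots> = (a+b) \<cdot>\<^sub>v v + A *\<^sub>v (peval A p v + peval A q v)"
    unfolding peval_pCons[OF A v] IH ..
  also have "\<dots> = (a \<cdot>\<^sub>v v + A *\<^sub>v peval A p v) + (b \<cdot>\<^sub>v v + A *\<^sub>v peval A q v)"
    by (subst mult_add_distrib_mat_vec[OF A], insert A v, auto intro!: eq_vecI simp: add_smult_distrib_vec)
  finally show "peval A (pCons a p + pCons b q) v = peval A (pCons a p) v + peval A (pCons b q) v" unfolding peval_pCons[OF A v] .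
qed

lemma peval_smult: assumes A: "A \<in> carrier_mat n n" and v: "v \<in> carrier_vec n"
  shows "peval A (Polynomial.smult d p) v = d \<cdot>\<^sub>v peval A p v"
proof (induct p)
  case 0
  then show ?case using v by (auto intro!: eq_vecI)
next
  case (pCons a p)
  show ?case unfolding smult_pCons peval_pCons[OF A v] pCons(2)
    by (subst mmv_smult[OF A], insert A v, auto intro!: eq_vecI simp: algebra_simps)
qed

lemma peval_vec_add: assumes A: "A \<in> carrier_mat n n" and v: "v \<in> carrier_vec n" and w: "w \<in> carrier_vec n"
  shows "peval A p (v + w) = peval A p v + peval A p w"
proof (induct p)
  case 0
  then show ?case using v w by (auto intro!: eq_vecI)
next
  case (pCons a p)
  have vw: "v + w \<in> carrier_vec n" using v w by auto
  show ?case unfolding peval_pCons[OF A v] peval_pCons[OF A w] peval_pCons[OF A vw] pCons(2)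
    by (subst mult_add_distrib_mat_vec[OF A], insert A v w, auto intro!: eq_vecI simp: algebra_simps)
qed

lemma peval_vec_smult: assumes A: "A \<in> carrier_mat n n" and v: "v \<in> carrier_vec n"
  shows "peval A p (d \<cdot>\<^sub>v v) = d \<cdot>\<^sub>v peval A p v"
proof (induct p)
  case 0
  then show ?case using v by (auto intro!: eq_vecI)
next
  case (pCons a p)
  have cv: "d \<cdot>\<^sub>v v \<in> carrier_vec n" using v by auto
  show ?case unfolding peval_pCons[OF A v] peval_pCons[OF A cv] pCons(2)
    by (subst mmv_smult[OF A], insert A v, auto intro!: eq_vecI simp: algebra_simps)
qed

lemma peval_vec_zero[simp]: assumes A: "A \<in> carrier_mat n n"
  shows "peval A p (0\<^sub>v n) = 0\<^sub>v n"
proof (induct p)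
  case (pCons a p)
  then show ?case unfolding peval_pCons[OF A zero_carrier_vec] using A by (auto intro!: eq_vecI)
qed simp

lemma peval_const: assumes A: "A \<in> carrier_mat n n" and v: "v \<in> carrier_vec n"
  shows "peval A [:d:] v = d \<cdot>\<^sub>v v"
  using peval_pCons[OF A v, of d 0] A v by (auto intro!: eq_vecI)

lemma peval_one: assumes A: "A \<in> carrier_mat n n" and v: "v \<in> carrier_vec n"
  shows "peval A 1 v = v"
  using peval_const[OF A v, of 1] by (simp add: one_pCons)

lemma peval_mult: assumes A: "A \<in> carrier_mat n n" and v: "v \<in> carrier_vec n"
  shows "peval A (p * q) v = peval A p (peval A q v)"
proof (induct p)
  case 0
  have c: "peval A q v \<in> carrier_vec n" using A v by simp
  show ?case using peval_0[OF c, of A] peval_0[OF v, of A] by simp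
next
  case (pCons a p)
  have q: "peval A q v \<in> carrier_vec n" using A v by simp
  have "peval A (pCons a p * q) v = peval A (Polynomial.smult a q + pCons 0 (p * q)) v" by simp
  also have "\<dots> = a \<cdot>\<^sub>v peval A q v + (0 \<cdot>\<^sub>v v + A *\<^sub>v peval A p (peval A q v))"
    unfolding peval_add[OF A v] peval_smult[OF A v] peval_pCons[OF A v] pCons(2) ..
  also have "\<dots> = peval A (pCons a p) (peval A q v)"
    unfolding peval_pCons[OF A q] using A v q by (auto intro!: eq_vecI)
  finally show ?case .
qed

lemma peval_uminus: assumes A: "A \<in> carrier_mat n n" and v: "v \<in> carrier_vec n"
  shows "peval A (- p) v = - peval A p v"
  using peval_smult[OF A v, of "-1" p] A v by (auto intro!: eq_vecI)

lemma peval_diff: assumes A: "A \<in> carrier_mat n n" and v: "v \<in> carrier_vec n"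
  shows "peval A (p - q) v = peval A p v - peval A q v"
  using peval_add[OF A v, of p "-q"] peval_uminus[OF A v, of q] A v by (auto intro!: eq_vecI)

lemma peval_vec_diff: assumes A: "A \<in> carrier_mat n n" and v: "v \<in> carrier_vec n" and w: "w \<in> carrier_vec n"
  shows "peval A p (v - w) = peval A p v - peval A p w"
proof -
  have "v - w = v + (-1) \<cdot>\<^sub>v w" using v w by (auto intro!: eq_vecI)
  then show ?thesis using peval_vec_add[OF A v, of "(-1) \<cdot>\<^sub>v w" p] peval_vec_smult[OF A w, of p "-1"] A v w
    by (auto intro!: eq_vecI)
qed

lemma peval_commute: assumes A: "A \<in> carrier_mat n n" and B: "B \<in> carrier_mat n n" 
  and v: "v \<in> carrier_vec n" and AB: "B * A = A * B"
  shows "B *\<^sub>v peval A p v = peval A p (B *\<^sub>v v)"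
proof (induct p)
  case 0
  have c: "B *\<^sub>v v \<in> carrier_vec n" using B v by simp
  show ?case using peval_0[OF c, of A] peval_0[OF v, of A] B by simp
next
  case (pCons a p)
  have Bv: "B *\<^sub>v v \<in> carrier_vec n" using B v by auto
  have "B *\<^sub>v (A *\<^sub>v peval A p v) = A *\<^sub>v (B *\<^sub>v peval A p v)"
    using assoc_mult_mat_vec[OF B A, of "peval A p v"] assoc_mult_mat_vec[OF A B, of "peval A p v"] AB A v by auto
  then show ?case unfolding peval_pCons[OF A v] peval_pCons[OF A Bv] pCons(2)[symmetric]
    using A B v by (simp add: mult_add_distrib_mat_vec mmv_smult)
qed

lemma peval_sim: assumes A: "A \<in> carrier_mat n n" and J: "J \<in> carrier_mat n n" and P: "P \<in> carrier_mat n n"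
  and w: "w \<in> carrier_vec n" and AP: "A * P = P * J"
  shows "peval A p (P *\<^sub>v w) = P *\<^sub>v peval J p w"
proof (induct p)
  case 0
  then show ?case using A J P w by simp
next
  case (pCons a p)
  have Pw: "P *\<^sub>v w \<in> carrier_vec n" using P w by auto
  have "A *\<^sub>v (P *\<^sub>v peval J p w) = P *\<^sub>v (J *\<^sub>v peval J p w)"
    using assoc_mult_mat_vec[OF A P, of "peval J p w"] assoc_mult_mat_vec[OF P J, of "peval J p w"] AP J w by auto
  then show ?case unfolding peval_pCons[OF A Pw] peval_pCons[OF J w] pCons(2)
    using A J P w by (simp add: mult_add_distrib_mat_vec mmv_smult)
qed



lemma smult_one_mult_vec: "x \<in> carrier_vec n \<Longrightarrow> (k \<cdot>\<^sub>m 1\<^sub>m n) *\<^sub>v x = k \<cdot>\<^sub>v (x :: 'a :: comm_ring_1 vec)"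
proof (rule eq_vecI)
  fix i assume x: "x \<in> carrier_vec n" and i: "i < dim_vec (k \<cdot>\<^sub>v x)"
  hence i: "i < n" by auto
  have "row (k \<cdot>\<^sub>m 1\<^sub>m n) i = k \<cdot>\<^sub>v unit_vec n i" using i by (auto intro!: eq_vecI simp: unit_vec_def)
  then show "((k \<cdot>\<^sub>m 1\<^sub>m n) *\<^sub>v x) $ i = (k \<cdot>\<^sub>v x) $ i"
    using i x by (simp add: scalar_prod_smult_left)
qed auto

lemma mat_eq_zero_by_vec: fixes M :: "'a :: comm_ring_1 mat" assumes M: "M \<in> carrier_mat n n"
  and z: "\<And>w. w \<in> carrier_vec n \<Longrightarrow> M *\<^sub>v w = 0\<^sub>v n"
shows "M = 0\<^sub>m n n"
proof (rule eq_matI)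
  fix i j assume i: "i < dim_row (0\<^sub>m n n)" and j: "j < dim_col (0\<^sub>m n n)"
  hence ij: "i < n" "j < n" by auto
  have "(M *\<^sub>v unit_vec n j) $ i = 0" using z[of "unit_vec n j"] ij by auto
  moreover have "(M *\<^sub>v unit_vec n j) $ i = M $$ (i,j)" using M ij 
    by (simp add: scalar_prod_right_unit)
  ultimately show "M $$ (i,j) = 0\<^sub>m n n $$ (i,j)" using ij by simp
qed (insert M, auto)

lemma PI_transfer:
  fixes \<pi> :: "'a::comm_ring_1 poly vec \<Rightarrow> 'a vec" and S :: "'a mat set"
  assumes S: "S \<subseteq> carrier_mat n n"
  and pc: "\<And>x. x \<in> carrier_vec m \<Longrightarrow> \<pi> x \<in> carrier_vec n"
  and padd: "\<And>x y. x \<in> carrier_vec m \<Longrightarrow> y \<in> carrier_vec m \<Longrightarrow> \<pi> (x + y) = \<pi> x + \<pi> y"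
  and psub: "\<And>x y. x \<in> carrier_vec m \<Longrightarrow> y \<in> carrier_vec m \<Longrightarrow> \<pi> (x - y) = \<pi> x - \<pi> y"
  and psm: "\<And>x k. x \<in> carrier_vec m \<Longrightarrow> \<pi> ([:k:] \<cdot>\<^sub>v x) = k \<cdot>\<^sub>v \<pi> x"
  and psurj: "\<And>w. w \<in> carrier_vec n \<Longrightarrow> \<exists>x\<in>carrier_vec m. \<pi> x = w"
  and plift: "\<And>\<psi>. \<psi> \<in> S \<Longrightarrow> \<exists>G\<in>carrier_mat m m. \<forall>x\<in>carrier_vec m. \<pi> (G *\<^sub>v x) = \<psi> *\<^sub>v \<pi> x"
  and PI: "is_PI m (\<lambda>k. [:k:]) (carrier_mat m m) f"
  shows "is_PI n (\<lambda>k. k) S f"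
  unfolding is_PI_def
proof (intro allI impI)
  fix \<rho> :: "nat \<Rightarrow> 'a mat" assume \<rho>: "\<forall>i. \<rho> i \<in> S"
  have "\<forall>i. \<exists>G. G \<in> carrier_mat m m \<and> (\<forall>x\<in>carrier_vec m. \<pi> (G *\<^sub>v x) = \<rho> i *\<^sub>v \<pi> x)"
    using plift \<rho> by blast
  then obtain G :: "nat \<Rightarrow> 'a poly mat" where G: "\<And>i. G i \<in> carrier_mat m m"
    and Gl: "\<And>i x. x \<in> carrier_vec m \<Longrightarrow> \<pi> (G i *\<^sub>v x) = \<rho> i *\<^sub>v \<pi> x" by metis
  have \<rho>c: "\<And>i. \<rho> i \<in> carrier_mat n n" using \<rho> S by auto
  have main: "eval_ncpoly m (\<lambda>k. [:k:]) G g \<in> carrier_mat m m \<and> eval_ncpoly n (\<lambda>k. k) \<rho> g \<in> carrier_mat n n \<and>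
    (\<forall>x\<in>carrier_vec m. \<pi> (eval_ncpoly m (\<lambda>k. [:k:]) G g *\<^sub>v x) = eval_ncpoly n (\<lambda>k. k) \<rho> g *\<^sub>v \<pi> x)" for g
  proof (induct g)
    case (NVar i)
    then show ?case using G \<rho>c Gl by auto
  next
    case (NConst k)
    then show ?case using psm pc by (auto simp: smult_one_mult_vec)
  next
    case (NAdd p q)
    then show ?case using padd pc by (auto simp: add_mult_distrib_mat_vec)
  next
    case (NSub p q)
    then show ?case using psub pc by (auto simp: minus_mult_distrib_mat_vec)
  next
    case (NMul p q)
    then show ?case using pc by (auto simp: assoc_mult_mat_vec)
  qed
  have z: "eval_ncpoly m (\<lambda>k. [:k:]) G f = 0\<^sub>m m m" using PI G unfolding is_PI_def by auto
  have p0: "\<pi> (0\<^sub>v m) = 0\<^sub>v n"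
  proof -
    have "\<pi> (0\<^sub>v m) = \<pi> ([:0:] \<cdot>\<^sub>v 0\<^sub>v m)" by (auto intro!: arg_cong[of _ _ \<pi>] eq_vecI)
    also have "\<dots> = 0\<^sub>v n" using psm[of "0\<^sub>v m" 0] pc[of "0\<^sub>v m"] by (auto intro!: eq_vecI)
    finally show ?thesis .
  qed
  show "eval_ncpoly n (\<lambda>k. k) \<rho> f = 0\<^sub>m n n"
  proof (rule mat_eq_zero_by_vec)
    show "eval_ncpoly n (\<lambda>k. k) \<rho> f \<in> carrier_mat n n" using main by auto
    fix w :: "'a vec" assume w: "w \<in> carrier_vec n"
    from psurj[OF w] obtain x where x: "x \<in> carrier_vec m" and w: "\<pi> x = w" by auto
    have "eval_ncpoly n (\<lambda>k. k) \<rho> f *\<^sub>v w = \<pi> (eval_ncpoly m (\<lambda>k. [:k:]) G f *\<^sub>v x)"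
      using main x w by auto
    also have "\<dots> = \<pi> (0\<^sub>m m m *\<^sub>v x)" unfolding z ..
    also have "0\<^sub>m m m *\<^sub>v x = 0\<^sub>v m" using x by (auto intro!: eq_vecI)
    also have "\<pi> (0\<^sub>v m) = 0\<^sub>v n" by (rule p0)
    finally show "eval_ncpoly n (\<lambda>k. k) \<rho> f *\<^sub>v w = 0\<^sub>v n" .
  qed
qed



fun vsum :: "nat \<Rightarrow> nat \<Rightarrow> (nat \<Rightarrow> 'a::monoid_add vec) \<Rightarrow> 'a vec" where
  "vsum n 0 f = 0\<^sub>v n"
| "vsum n (Suc k) f = vsum n k f + f k"

lemma vsum_carrier: "(\<And>i. i < k \<Longrightarrow> f i \<in> carrier_vec n) \<Longrightarrow> vsum n k f \<in> carrier_vec n"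
  by (induct k) auto

lemma vsum_index: "(\<And>i. i < k \<Longrightarrow> f i \<in> carrier_vec n) \<Longrightarrow> j < n \<Longrightarrow> vsum n k f $ j = (\<Sum>i<k. f i $ j)"
proof (induct k)
  case (Suc k)
  have fk: "f k \<in> carrier_vec n" using Suc(2) by auto
  have IH: "vsum n k f $ j = (\<Sum>i<k. f i $ j)" using Suc by auto
  have "vsum n (Suc k) f $ j = vsum n k f $ j + f k $ j" 
    using fk Suc(3) by simp
  then show ?case unfolding IH by simp
qed auto

lemma vsum_cong: "(\<And>i. i < k \<Longrightarrow> f i = h i) \<Longrightarrow> vsum n k f = vsum n k h"
  by (induct k) auto

lemma vsum_mult: assumes B: "B \<in> carrier_mat n n" and f: "\<And>i. i < k \<Longrightarrow> f i \<in> carrier_vec n"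
  shows "B *\<^sub>v vsum n k f = vsum n k (\<lambda>i. B *\<^sub>v f i)"
  using f
proof (induct k)
  case 0
  then show ?case using B by (auto intro!: eq_vecI)
next
  case (Suc k)
  have "vsum n k f \<in> carrier_vec n" using Suc(2) by (intro vsum_carrier, auto)
  then show ?case using Suc B by (simp add: mult_add_distrib_mat_vec)
qed

lemma peval_vsum: assumes A: "A \<in> carrier_mat n n" and f: "\<And>i. i < k \<Longrightarrow> f i \<in> carrier_vec n"
  shows "peval A p (vsum n k f) = vsum n k (\<lambda>i. peval A p (f i))"
  using f
proof (induct k)
  case 0
  then show ?case using A by auto
next
  case (Suc k)
  have "vsum n k f \<in> carrier_vec n" using Suc(2) by (intro vsum_carrier, auto)
  then show ?case using Suc A by (simp add: peval_vec_add)
qed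

lemma vec_eq_n: "u \<in> carrier_vec n \<Longrightarrow> w \<in> carrier_vec n \<Longrightarrow> (\<And>j. j < n \<Longrightarrow> u $ j = w $ j) \<Longrightarrow> u = w"
  by (rule eq_vecI, auto)

lemma peval_sum_index: fixes k :: nat assumes A: "A \<in> carrier_mat n n" and v: "v \<in> carrier_vec n" and j: "j < n"
  shows "peval A (\<Sum>i<k. f i) v $ j = (\<Sum>i<k. peval A (f i) v $ j)"
proof (induct k)
  case 0
  then show ?case using A v j by simp
next
  case (Suc k)
  have c: "peval A (f k) v \<in> carrier_vec n" using A v by simp
  have "peval A (\<Sum>i<Suc k. f i) v = peval A (\<Sum>i<k. f i) v + peval A (f k) v"
    by (simp add: peval_add[OF A v])
  also have "\<dots> $ j = peval A (\<Sum>i<k. f i) v $ j + peval A (f k) v $ j" using c j by simp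
  finally show ?case using Suc by simp
qed

definition piA :: "'a::comm_ring_1 mat \<Rightarrow> nat \<Rightarrow> nat \<Rightarrow> (nat \<Rightarrow> 'a vec) \<Rightarrow> 'a poly vec \<Rightarrow> 'a vec" where
  "piA A n m g x = vsum n m (\<lambda>i. peval A (x $ i) (g i))"

context
  fixes A :: "'a :: comm_ring_1 mat" and n m :: nat and g :: "nat \<Rightarrow> 'a vec"
  assumes A: "A \<in> carrier_mat n n" and g: "\<And>i. i < m \<Longrightarrow> g i \<in> carrier_vec n"
begin

lemma piA_carrier: "piA A n m g x \<in> carrier_vec n"
  unfolding piA_def using A g by (intro vsum_carrier, auto)

lemma piA_dim[simp]: "dim_vec (piA A n m g x) = n"
  using piA_carrier[of x] by (rule carrier_vecD)

lemma peval_g_dim: "i < m \<Longrightarrow> dim_vec (peval A p (g i)) = n"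
  using peval_carrier[OF A g, of i p] by (rule carrier_vecD)

lemma piA_index: "j < n \<Longrightarrow> piA A n m g x $ j = (\<Sum>i<m. peval A (x $ i) (g i) $ j)"
  unfolding piA_def using A g by (intro vsum_index, auto)

lemma piA_add: assumes x: "x \<in> carrier_vec m" and y: "y \<in> carrier_vec m"
  shows "piA A n m g (x + y) = piA A n m g x + piA A n m g y"
proof (rule vec_eq_n[OF piA_carrier])
  show "piA A n m g x + piA A n m g y \<in> carrier_vec n" using piA_carrier by auto
  fix j assume j: "j < n"
  have "piA A n m g (x + y) $ j = (\<Sum>i<m. peval A (x $ i) (g i) $ j + peval A (y $ i) (g i) $ j)"
    unfolding piA_index[OF j]
  proof (rule sum.cong[OF refl])
    fix i assume i: "i \<in> {..<m}"
    then have "(x + y) $ i = x $ i + y $ i" using x y by auto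
    then show "peval A ((x + y) $ i) (g i) $ j = peval A (x $ i) (g i) $ j + peval A (y $ i) (g i) $ j"
      using i j peval_g_dim[of i] by (simp add: peval_add[OF A g])
  qed
  also have "\<dots> = (piA A n m g x + piA A n m g y) $ j" using j by (simp add: piA_index sum.distrib)
  finally show "piA A n m g (x + y) $ j = (piA A n m g x + piA A n m g y) $ j" .
qed

lemma piA_sub: assumes x: "x \<in> carrier_vec m" and y: "y \<in> carrier_vec m"
  shows "piA A n m g (x - y) = piA A n m g x - piA A n m g y"
proof (rule vec_eq_n[OF piA_carrier])
  show "piA A n m g x - piA A n m g y \<in> carrier_vec n" using piA_carrier by auto
  fix j assume j: "j < n"
  have "piA A n m g (x - y) $ j = (\<Sum>i<m. peval A (x $ i) (g i) $ j - peval A (y $ i) (g i) $ j)"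
    unfolding piA_index[OF j]
  proof (rule sum.cong[OF refl])
    fix i assume i: "i \<in> {..<m}"
    then have "(x - y) $ i = x $ i - y $ i" using x y by auto
    then show "peval A ((x - y) $ i) (g i) $ j = peval A (x $ i) (g i) $ j - peval A (y $ i) (g i) $ j"
      using i j peval_g_dim[of i] by (simp add: peval_diff[OF A g])
  qed
  also have "\<dots> = (piA A n m g x - piA A n m g y) $ j" using j by (simp add: piA_index sum_subtractf)
  finally show "piA A n m g (x - y) $ j = (piA A n m g x - piA A n m g y) $ j" .
qed

lemma piA_sm: assumes x: "x \<in> carrier_vec m"
  shows "piA A n m g ([:k:] \<cdot>\<^sub>v x) = k \<cdot>\<^sub>v piA A n m g x"
proof (rule vec_eq_n[OF piA_carrier])
  show "k \<cdot>\<^sub>v piA A n m g x \<in> carrier_vec n" using piA_carrier by auto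
  fix j assume j: "j < n"
  have "piA A n m g ([:k:] \<cdot>\<^sub>v x) $ j = (\<Sum>i<m. k * peval A (x $ i) (g i) $ j)"
    unfolding piA_index[OF j]
  proof (rule sum.cong[OF refl])
    fix i assume i: "i \<in> {..<m}"
    then have "([:k:] \<cdot>\<^sub>v x) $ i = Polynomial.smult k (x $ i)" using x by auto
    then show "peval A (([:k:] \<cdot>\<^sub>v x) $ i) (g i) $ j = k * peval A (x $ i) (g i) $ j"
      using i j peval_g_dim[of i] by (simp add: peval_smult[OF A g])
  qed
  also have "\<dots> = (k \<cdot>\<^sub>v piA A n m g x) $ j" using j by (simp add: piA_index sum_distrib_left)
  finally show "piA A n m g ([:k:] \<cdot>\<^sub>v x) $ j = (k \<cdot>\<^sub>v piA A n m g x) $ j" .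
qed

lemma piA_lift: assumes gen: "\<And>w. w \<in> carrier_vec n \<Longrightarrow> \<exists>x\<in>carrier_vec m. piA A n m g x = w"
  and psi: "\<psi> \<in> centralizer n A"
  shows "\<exists>G\<in>carrier_mat m m. \<forall>x\<in>carrier_vec m. piA A n m g (G *\<^sub>v x) = \<psi> *\<^sub>v piA A n m g x"
proof -
  from psi have P: "\<psi> \<in> carrier_mat n n" and comm: "\<psi> * A = A * \<psi>" unfolding centralizer_def by auto
  have "\<exists>y. i < m \<longrightarrow> y \<in> carrier_vec m \<and> piA A n m g y = \<psi> *\<^sub>v g i" for i
  proof (cases "i < m")
    case True
    then have "\<psi> *\<^sub>v g i \<in> carrier_vec n" using P g by auto
    from gen[OF this] show ?thesis by auto
  qed auto
  hence "\<forall>i. \<exists>y. i < m \<longrightarrow> y \<in> carrier_vec m \<and> piA A n m g y = \<psi> *\<^sub>v g i" by blast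
  then obtain y where y: "\<And>i. i < m \<Longrightarrow> y i \<in> carrier_vec m" 
    and yp: "\<And>i. i < m \<Longrightarrow> piA A n m g (y i) = \<psi> *\<^sub>v g i" by metis
  define G where "G = mat m m (\<lambda>(k,i). y i $ k)"
  have G: "G \<in> carrier_mat m m" unfolding G_def by auto
  show ?thesis
  proof (intro bexI[OF _ G] ballI)
    fix x :: "'a poly vec" assume x: "x \<in> carrier_vec m"
    have Gx: "(G *\<^sub>v x) $ k = (\<Sum>i<m. y i $ k * x $ i)" if k: "k < m" for k
      using k x unfolding G_def by (auto simp: scalar_prod_def lessThan_atLeast0 intro!: sum.cong)
    show "piA A n m g (G *\<^sub>v x) = \<psi> *\<^sub>v piA A n m g x"
    proof (rule eq_vecI)
      fix j assume "j < dim_vec (\<psi> *\<^sub>v piA A n m g x)"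
      hence j: "j < n" using P by auto
      have "piA A n m g (G *\<^sub>v x) $ j = (\<Sum>k<m. peval A ((G *\<^sub>v x) $ k) (g k) $ j)"
        by (rule piA_index[OF j])
      also have "\<dots> = (\<Sum>k<m. \<Sum>i<m. peval A (x $ i) (peval A (y i $ k) (g k)) $ j)"
      proof (intro sum.cong refl)
        fix k assume k: "k \<in> {..<m}"
        have "peval A ((G *\<^sub>v x) $ k) (g k) $ j = (\<Sum>i<m. peval A (y i $ k * x $ i) (g k) $ j)"
          using k by (subst Gx, simp, intro peval_sum_index[OF A g j], auto)
        also have "\<dots> = (\<Sum>i<m. peval A (x $ i) (peval A (y i $ k) (g k)) $ j)"
          using k by (intro sum.cong refl, subst peval_mult[OF A g, symmetric], auto simp: mult.commute)
        finally show "peval A ((G *\<^sub>v x) $ k) (g k) $ j = (\<Sum>i<m. peval A (x $ i) (peval A (y i $ k) (g k)) $ j)" .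
      qed
      also have "\<dots> = (\<Sum>i<m. \<Sum>k<m. peval A (x $ i) (peval A (y i $ k) (g k)) $ j)"
        by (rule sum.swap)
      also have "\<dots> = (\<Sum>i<m. peval A (x $ i) (\<psi> *\<^sub>v g i) $ j)"
      proof (intro sum.cong refl)
        fix i assume i: "i \<in> {..<m}"
        have "peval A (x $ i) (\<psi> *\<^sub>v g i) = peval A (x $ i) (piA A n m g (y i))" using yp i by auto
        also have "\<dots> = vsum n m (\<lambda>k. peval A (x $ i) (peval A (y i $ k) (g k)))"
          unfolding piA_def by (rule peval_vsum[OF A], insert A g, auto)
        moreover have "vsum n m (\<lambda>k. peval A (x $ i) (peval A (y i $ k) (g k))) $ j = 
          (\<Sum>k<m. peval A (x $ i) (peval A (y i $ k) (g k)) $ j)"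
          by (rule vsum_index[OF _ j], insert A g, auto)
        ultimately show "(\<Sum>k<m. peval A (x $ i) (peval A (y i $ k) (g k)) $ j) = peval A (x $ i) (\<psi> *\<^sub>v g i) $ j"
          by simp
      qed
      also have "\<dots> = (\<psi> *\<^sub>v piA A n m g x) $ j"
      proof -
        have "\<psi> *\<^sub>v piA A n m g x = vsum n m (\<lambda>i. \<psi> *\<^sub>v peval A (x $ i) (g i))"
          unfolding piA_def by (rule vsum_mult[OF P], insert A g, auto)
        also have "\<dots> = vsum n m (\<lambda>i. peval A (x $ i) (\<psi> *\<^sub>v g i))"
          by (rule vsum_cong, rule peval_commute[OF A P _ comm], rule g)
        also have "\<dots> $ j = (\<Sum>i<m. peval A (x $ i) (\<psi> *\<^sub>v g i) $ j)"
          by (rule vsum_index[OF _ j], insert A g P, auto)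
        finally show ?thesis by simp
      qed
      finally show "piA A n m g (G *\<^sub>v x) $ j = (\<psi> *\<^sub>v piA A n m g x) $ j" .
    qed (insert P, auto)
  qed
qed

end


lemma smult_append_vec: "a \<cdot>\<^sub>v (x @\<^sub>v y) = (a \<cdot>\<^sub>v x) @\<^sub>v (a \<cdot>\<^sub>v y)"
  by (rule eq_vecI, auto)

lemma zero_append_vec: "0\<^sub>v n @\<^sub>v 0\<^sub>v N = 0\<^sub>v (n + N)"
  by (rule eq_vecI, auto)

lemma jordan_matrix_Cons: "jordan_matrix ((n,e) # l) = four_block_mat (jordan_block n e) 
  (0\<^sub>m n (sum_list (map fst l))) (0\<^sub>m (sum_list (map fst l)) n) (jordan_matrix l)"
  unfolding jordan_matrix_def by (simp add: Let_def jordan_matrix_def[symmetric])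

lemma peval_block: fixes A :: "'a :: comm_ring_1 mat"
  assumes A: "A \<in> carrier_mat n n" and D: "D \<in> carrier_mat N N"
  and x: "x \<in> carrier_vec n" and y: "y \<in> carrier_vec N"
  shows "peval (four_block_mat A (0\<^sub>m n N) (0\<^sub>m N n) D) p (x @\<^sub>v y) = peval A p x @\<^sub>v peval D p y"
proof (induct p)
  case 0
  then show ?case using x y by (simp add: zero_append_vec)
next
  case (pCons a p)
  let ?M = "four_block_mat A (0\<^sub>m n N) (0\<^sub>m N n) D"
  have M: "?M \<in> carrier_mat (n+N) (n+N)" using A D by auto
  have xy: "x @\<^sub>v y \<in> carrier_vec (n+N)" using x y by auto
  show ?case unfolding peval_pCons[OF M xy] peval_pCons[OF A x] peval_pCons[OF D y] pCons(2)
    by (subst mult_mat_vec_split[OF A D], insert A D x y, auto simp: smult_append_vec append_vec_add)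
qed

lemma jb_split: "jordan_block n (e :: 'a :: comm_ring_1) = jordan_block n 0 + e \<cdot>\<^sub>m 1\<^sub>m n"
  by (rule eq_matI, auto)

lemma peval_lin: fixes A :: "'a :: comm_ring_1 mat"
  assumes A: "A \<in> carrier_mat n n" and v: "v \<in> carrier_vec n"
  shows "peval A [:-e,1:] v = A *\<^sub>v v - e \<cdot>\<^sub>v v"
proof -
  have "peval A [:-e,1:] v = (-e) \<cdot>\<^sub>v v + A *\<^sub>v (1 \<cdot>\<^sub>v v)"
    by (subst peval_pCons[OF A v], subst peval_const[OF A v], rule refl)
  then show ?thesis using A v by (auto intro!: eq_vecI)
qed

lemma peval_jb_lin: fixes e :: "'a :: comm_ring_1"
  assumes v: "v \<in> carrier_vec n"
  shows "peval (jordan_block n e) [:-e,1:] v = jordan_block n 0 *\<^sub>v v"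
proof -
  have "jordan_block n e *\<^sub>v v = jordan_block n 0 *\<^sub>v v + e \<cdot>\<^sub>v v"
    unfolding jb_split[of n e] 
    by (subst add_mult_distrib_mat_vec[OF jordan_block_carrier _ v], auto simp: smult_one_mult_vec[OF v])
  then show ?thesis unfolding peval_lin[OF jordan_block_carrier v] using v by (auto intro!: eq_vecI)
qed

lemma peval_jb_pow: fixes e :: "'a :: comm_ring_1"
  shows "v \<in> carrier_vec n \<Longrightarrow> peval (jordan_block n e) ([:-e,1:]^k) v = (jordan_block n 0 ^\<^sub>m k) *\<^sub>v v"
proof (induct k arbitrary: v)
  case 0
  then show ?case by (simp add: peval_one[OF jordan_block_carrier])
next
  case (Suc k v)
  note v = Suc(2)
  have Jv: "jordan_block n 0 *\<^sub>v v \<in> carrier_vec n" by (rule mult_mat_vec_carrier[OF jordan_block_carrier v])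
  have "peval (jordan_block n e) ([:-e,1:]^Suc k) v = peval (jordan_block n e) ([:-e,1:]^k) (peval (jordan_block n e) [:-e,1:] v)"
    unfolding power_Suc2 by (rule peval_mult[OF jordan_block_carrier v])
  also have "\<dots> = (jordan_block n 0 ^\<^sub>m k) *\<^sub>v (jordan_block n 0 *\<^sub>v v)"
    unfolding peval_jb_lin[OF v] by (rule Suc(1)[OF Jv])
  also have "\<dots> = (jordan_block n 0 ^\<^sub>m Suc k) *\<^sub>v v"
    using v by (simp add: assoc_mult_mat_vec[symmetric, of _ n n _ n])
  finally show ?case .
qed


lemma J0pow_unit: assumes k: "k < n"
  shows "(jordan_block n (0::'a::field) ^\<^sub>m k) *\<^sub>v unit_vec n (n-1) = unit_vec n (n-1-k)"
proof (rule eq_vecI)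
  fix i assume "i < dim_vec (unit_vec n (n - 1 - k) :: 'a vec)"
  hence i: "i < n" by auto
  have "((jordan_block n (0::'a) ^\<^sub>m k) *\<^sub>v unit_vec n (n-1)) $ i = (jordan_block n (0::'a) ^\<^sub>m k) $$ (i, n-1)"
    using i k by (simp add: jordan_block_zero_pow scalar_prod_right_unit)
  also have "\<dots> = (if i = n - 1 - k then 1 else 0)" using i k by (auto simp: jordan_block_zero_pow)
  finally show "((jordan_block n (0::'a) ^\<^sub>m k) *\<^sub>v unit_vec n (n-1)) $ i = unit_vec n (n-1-k) $ i"
    using i k by simp
qed (auto simp: jordan_block_zero_pow)

lemma J0pow_n: "jordan_block n (0::'a::field) ^\<^sub>m n = 0\<^sub>m n n"
  by (rule eq_matI, auto simp: jordan_block_zero_pow)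

lemma peval_nilp: fixes e :: "'a :: field"
  assumes v: "v \<in> carrier_vec n"
  shows "peval (jordan_block n e) ([:-e,1:]^n) v = 0\<^sub>v n"
  unfolding peval_jb_pow[OF v] J0pow_n using v by (auto intro!: eq_vecI)

lemma peval_jb_unit: fixes e :: "'a :: field"
  assumes k: "k < n"
  shows "peval (jordan_block n e) ([:-e,1:]^(n-1-k)) (unit_vec n (n-1)) = unit_vec n k"
proof -
  have "peval (jordan_block n e) ([:-e,1:]^(n-1-k)) (unit_vec n (n-1)) = unit_vec n (n-1-(n-1-k))"
    unfolding peval_jb_pow[OF unit_vec_carrier] using k by (intro J0pow_unit, auto)
  also have "n-1-(n-1-k) = k" using k by auto
  finally show ?thesis .
qed

lemma block_gen: fixes e :: "'a :: field"
  assumes x: "x \<in> carrier_vec n"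
  shows "\<exists>S. peval (jordan_block n e) S (unit_vec n (n-1)) = x"
proof -
  let ?u = "unit_vec n (n-1) :: 'a vec"
  let ?J = "jordan_block n e"
  have "k \<le> n \<Longrightarrow> \<forall>x\<in>carrier_vec n. (\<forall>i. k \<le> i \<longrightarrow> i < n \<longrightarrow> x $ i = 0) \<longrightarrow> (\<exists>S. peval ?J S ?u = x)" for k
  proof (induct k)
    case 0
    show ?case
    proof (intro ballI impI)
      fix x :: "'a vec" assume x: "x \<in> carrier_vec n" and z: "\<forall>i. 0 \<le> i \<longrightarrow> i < n \<longrightarrow> x $ i = 0"
      have "x = 0\<^sub>v n" using x z by (auto intro!: eq_vecI)
      then show "\<exists>S. peval ?J S ?u = x" by (intro exI[of _ 0], auto)
    qed
  next
    case (Suc k)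
    hence k: "k < n" by auto
    show ?case
    proof (intro ballI impI)
      fix x :: "'a vec" assume x: "x \<in> carrier_vec n" and z: "\<forall>i. Suc k \<le> i \<longrightarrow> i < n \<longrightarrow> x $ i = 0"
      define x' where "x' = vec n (\<lambda>i. if i = k then 0 else x $ i)"
      have x': "x' \<in> carrier_vec n" unfolding x'_def by auto
      have z': "\<forall>i. k \<le> i \<longrightarrow> i < n \<longrightarrow> x' $ i = 0" using z unfolding x'_def by auto
      from Suc(1)[OF less_imp_le[OF k]] x' z' obtain S' where S': "peval ?J S' ?u = x'" by auto
      have xx: "x = x' + (x $ k) \<cdot>\<^sub>v unit_vec n k"
      proof (rule eq_vecI)
        fix i assume "i < dim_vec (x' + (x $ k) \<cdot>\<^sub>v unit_vec n k)"
        hence i: "i < n" by auto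
        show "x $ i = (x' + (x $ k) \<cdot>\<^sub>v unit_vec n k) $ i"
          using i k unfolding x'_def by (cases "i = k", auto)
      qed (insert x, auto)
      have "peval ?J (S' + Polynomial.smult (x $ k) ([:-e,1:]^(n-1-k))) ?u = x"
        unfolding peval_add[OF jordan_block_carrier unit_vec_carrier] peval_smult[OF jordan_block_carrier unit_vec_carrier]
          peval_jb_unit[OF k] S' using xx by simp
      then show "\<exists>S. peval ?J S ?u = x" by blast
    qed
  qed
  from this[of n] have "\<forall>x\<in>carrier_vec n. (\<forall>i. n \<le> i \<longrightarrow> i < n \<longrightarrow> x $ i = 0) \<longrightarrow> (\<exists>S. peval ?J S ?u = x)" 
    by simp
  with x show ?thesis by simp
qed



definition comax :: "'a::comm_ring_1 poly \<Rightarrow> 'a poly \<Rightarrow> bool" where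
  "comax X Y \<longleftrightarrow> (\<exists>a b. a * X + b * Y = 1)"

lemma comax_sym: "comax X Y \<Longrightarrow> comax Y X"
  unfolding comax_def by (metis add.commute)

lemma comax_one: "comax X 1"
  unfolding comax_def by (intro exI[of _ 0] exI[of _ 1], simp)

lemma comax_mult: assumes "comax X Y1" "comax X Y2" shows "comax X (Y1 * Y2)"
proof -
  from assms obtain a1 b1 a2 b2 where 1: "a1 * X + b1 * Y1 = 1" and 2: "a2 * X + b2 * Y2 = 1"
    unfolding comax_def by blast
  have "(a1 * X + b1 * Y1) * (a2 * X + b2 * Y2) = 1" using 1 2 by simp
  hence "(a1 * a2 * X + a1 * b2 * Y2 + b1 * Y1 * a2) * X + (b1 * b2) * (Y1 * Y2) = 1"
    by (simp add: algebra_simps)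
  thus ?thesis unfolding comax_def by blast
qed

lemma comax_pow: "comax X Y \<Longrightarrow> comax X (Y ^ k)"
  by (induct k, auto simp: comax_one comax_mult)

lemma aux_ring: "(a::'b::comm_ring_1) * x + (- a) * y = a * (x - y)" by (simp add: algebra_simps)

lemma comax_lin: fixes e :: "'a :: field" assumes "e \<noteq> u" shows "comax [:-e,1:] [:-u,1:]"
proof -
  have d: "[:-e,1:] - [:-u,1:] = [:u-e:]" by simp
  have "[:1/(u-e):] * [:-e,1:] + (- [:1/(u-e):]) * [:-u,1:] = [:1/(u-e):] * ([:-e,1:] - [:-u,1:])"
    by (rule aux_ring)
  also have "\<dots> = [:1/(u-e) * (u-e):]" unfolding d by simp
  also have "\<dots> = 1" using assms by (simp add: one_pCons)
  finally have "[:1/(u-e):] * [:-e,1:] + (- [:1/(u-e):]) * [:-u,1:] = 1" .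
  thus ?thesis unfolding comax_def by blast
qed

lemma comax_lin_pow: fixes e :: "'a :: field" assumes "e \<noteq> u" shows "comax ([:-e,1:]^n) ([:-u,1:]^k)"
  by (rule comax_pow, rule comax_sym, rule comax_pow, rule comax_sym, rule comax_lin[OF assms])

definition cnt :: "'a \<Rightarrow> (nat \<times> 'a) list \<Rightarrow> nat" where
  "cnt e l = length (filter (\<lambda>(n,u). u = e) l)"

definition Qe :: "'a::comm_ring_1 \<Rightarrow> (nat \<times> 'a) list \<Rightarrow> 'a poly" where
  "Qe e l = prod_list (map (\<lambda>(n,u). if u = e then 1 else [:-u,1:]^n) l)"

lemma cnt_Cons: "cnt e ((n,u) # l) = (if u = e then Suc (cnt e l) else cnt e l)"
  unfolding cnt_def by auto

lemma Qe_Cons: "Qe e ((n,u) # l) = (if u = e then 1 else [:-u,1:]^n) * Qe e l"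
  unfolding Qe_def by auto

lemma comax_Qe: fixes e :: "'a :: field" shows "comax ([:-e,1:]^n) (Qe e l)"
proof (induct l)
  case Nil
  then show ?case by (simp add: Qe_def comax_one)
next
  case (Cons a l)
  obtain k u where a: "a = (k,u)" by force
  show ?case unfolding a Qe_Cons
    by (rule comax_mult[OF _ Cons], cases "u = e", auto simp: comax_one intro!: comax_lin_pow)
qed

fun gens :: "(nat \<times> 'a::comm_ring_1) list \<Rightarrow> nat \<Rightarrow> 'a vec" where
  "gens [] i = 0\<^sub>v 0"
| "gens ((n,e) # l) i = (if i = cnt e l then unit_vec n (n - 1) else 0\<^sub>v n) @\<^sub>v gens l i"

lemma gens_carrier: "gens l i \<in> carrier_vec (sum_list (map fst l))"
proof (induct l)
  case (Cons a l)
  obtain k u where a: "a = (k,u)" by force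
  show ?case using Cons unfolding a by auto
qed auto


lemma vsum_append: "(\<And>i. i < k \<Longrightarrow> a i \<in> carrier_vec n) \<Longrightarrow> (\<And>i. i < k \<Longrightarrow> b i \<in> carrier_vec N) \<Longrightarrow>
  vsum (n + N) k (\<lambda>i. a i @\<^sub>v b i) = vsum n k a @\<^sub>v vsum N k b"
proof (induct k)
  case 0
  then show ?case by (simp add: zero_append_vec)
next
  case (Suc k)
  have "vsum n k a \<in> carrier_vec n" "vsum N k b \<in> carrier_vec N" using Suc(2,3) by (auto intro!: vsum_carrier)
  then show ?case using Suc by (simp add: append_vec_add)
qed

lemma vsum_zero: "(\<And>i. i < k \<Longrightarrow> f i = 0\<^sub>v n) \<Longrightarrow> vsum n k f = 0\<^sub>v n"
  by (induct k, auto)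

lemma vsum_single: assumes i0: "i0 < k" and f0: "f i0 \<in> carrier_vec n" 
  and z: "\<And>i. i < k \<Longrightarrow> i \<noteq> i0 \<Longrightarrow> f i = 0\<^sub>v n"
shows "vsum n k f = f i0"
  using i0 z
proof (induct k)
  case (Suc k)
  show ?case
  proof (cases "i0 = k")
    case True
    have "vsum n k f = 0\<^sub>v n" using Suc True by (intro vsum_zero, auto)
    then show ?thesis using True f0 by simp
  next
    case False
    then have "vsum n k f = f i0" using Suc by auto
    moreover have "f k = 0\<^sub>v n" using Suc False by auto
    ultimately show ?thesis using f0 by simp
  qed
qed auto

lemma vec0_eq: "v \<in> carrier_vec 0 \<Longrightarrow> w \<in> carrier_vec 0 \<Longrightarrow> v = w"
  by (rule eq_vecI, auto)

lemma gen_main: fixes l :: "(nat \<times> 'a::field) list"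
  assumes "0 \<notin> fst ` set l" "\<And>e. cnt e l \<le> m"
  shows "(\<forall>w\<in>carrier_vec (sum_list (map fst l)). \<exists>x\<in>carrier_vec m. 
           piA (jordan_matrix l) (sum_list (map fst l)) m (gens l) x = w) \<and> 
         (\<forall>e i. cnt e l \<le> i \<longrightarrow> peval (jordan_matrix l) (Qe e l) (gens l i) = 0\<^sub>v (sum_list (map fst l)))"
  using assms
proof (induct l)
  case Nil
  have J: "jordan_matrix ([] :: (nat \<times> 'a) list) \<in> carrier_mat 0 0" using jordan_matrix_carrier[of "[] :: (nat \<times> 'a) list"] by simp
  have g: "\<And>i. gens ([] :: (nat \<times> 'a) list) i \<in> carrier_vec 0" by simp
  have "\<And>x. piA (jordan_matrix ([] :: (nat \<times> 'a) list)) 0 m (gens []) x \<in> carrier_vec 0"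
    by (rule piA_carrier[OF J], simp)
  hence 1: "\<And>x w. w \<in> carrier_vec 0 \<Longrightarrow> piA (jordan_matrix ([] :: (nat \<times> 'a) list)) 0 m (gens []) x = w"
    by (rule vec0_eq)
  have 2: "\<And>p i. peval (jordan_matrix ([] :: (nat \<times> 'a) list)) p (gens [] i) = 0\<^sub>v 0"
    using peval_carrier[OF J g] by (rule vec0_eq, simp)
  show ?case
  proof (intro conjI ballI allI impI)
    fix w :: "'a vec" assume "w \<in> carrier_vec (sum_list (map fst ([] :: (nat \<times> 'a) list)))"
    then have w: "w \<in> carrier_vec 0" by simp
    show "\<exists>x\<in>carrier_vec m. piA (jordan_matrix []) (sum_list (map fst ([] :: (nat \<times> 'a) list))) m (gens []) x = w"
      using 1[OF w, of "0\<^sub>v m"] by (intro bexI[of _ "0\<^sub>v m"], simp_all only: list.map sum_list.Nil, auto)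
  next
    fix e :: 'a and i
    show "peval (jordan_matrix []) (Qe e []) (gens [] i) = 0\<^sub>v (sum_list (map fst ([] :: (nat \<times> 'a) list)))"
      using 2[of "Qe e []" i] by (simp only: list.map sum_list.Nil)
  qed
next
  case (Cons ne rest)
  obtain n e0 where ne: "ne = (n, e0)" by force
  let ?N' = "sum_list (map fst rest)"
  let ?J' = "jordan_matrix rest"
  let ?jb = "jordan_block n e0"
  define i0 where "i0 = cnt e0 rest"
  let ?u = "unit_vec n (n - 1) :: 'a vec"
  define h where "h = (\<lambda>i. if i = i0 then ?u else 0\<^sub>v n)"
  let ?g' = "gens rest"
  have n0: "n \<noteq> 0" using Cons(2) unfolding ne by auto
  have cnt_rest: "\<And>e. cnt e rest \<le> m"
  proof -
    fix e
    have "cnt e rest \<le> cnt e (ne # rest)" unfolding cnt_def by auto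
    then show "cnt e rest \<le> m" using Cons(3)[of e] by linarith
  qed
  have i0m: "i0 < m" using Cons(3)[of e0] unfolding ne cnt_Cons i0_def by auto
  from Cons(1)[OF _ cnt_rest] Cons(2) have IH1: "\<And>w. w \<in> carrier_vec ?N' \<Longrightarrow> \<exists>x\<in>carrier_vec m. piA ?J' ?N' m ?g' x = w"
    and IH2: "\<And>e i. cnt e rest \<le> i \<Longrightarrow> peval ?J' (Qe e rest) (?g' i) = 0\<^sub>v ?N'" unfolding ne by auto
  have J': "?J' \<in> carrier_mat ?N' ?N'" by simp
  have jb: "?jb \<in> carrier_mat n n" by simp
  have g': "\<And>i. ?g' i \<in> carrier_vec ?N'" by (rule gens_carrier)
  have h: "\<And>i. h i \<in> carrier_vec n" unfolding h_def by auto
  have Jeq: "jordan_matrix (ne # rest) = four_block_mat ?jb (0\<^sub>m n ?N') (0\<^sub>m ?N' n) ?J'"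
    unfolding ne by (rule jordan_matrix_Cons)
  have Neq: "sum_list (map fst (ne # rest)) = n + ?N'" unfolding ne by simp
  have geq: "\<And>i. gens (ne # rest) i = h i @\<^sub>v ?g' i" unfolding ne h_def i0_def by simp
  have pev: "\<And>p i. peval (jordan_matrix (ne # rest)) p (gens (ne # rest) i) = peval ?jb p (h i) @\<^sub>v peval ?J' p (?g' i)"
    unfolding Jeq geq by (rule peval_block[OF jb J' h g'])
  have pi: "\<And>x. piA (jordan_matrix (ne # rest)) (sum_list (map fst (ne # rest))) m (gens (ne # rest)) x
     = vsum n m (\<lambda>i. peval ?jb (x $ i) (h i)) @\<^sub>v piA ?J' ?N' m ?g' x"
    unfolding piA_def pev Neq by (rule vsum_append, insert jb J' h g', auto)
  from comax_Qe[of e0 n rest] obtain a b where ab: "a * [:-e0,1:]^n + b * Qe e0 rest = 1"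
    unfolding comax_def by blast
  define F where "F = a * [:-e0,1:]^n"
  define F' where "F' = b * Qe e0 rest"
  have FF: "F' = 1 - F" using ab unfolding F_def F'_def by (simp add: algebra_simps)
  have F_jb: "\<And>w. w \<in> carrier_vec n \<Longrightarrow> peval ?jb F w = 0\<^sub>v n"
    unfolding F_def by (subst peval_mult[OF jb], auto simp: peval_nilp)
  have F'_jb: "\<And>w. w \<in> carrier_vec n \<Longrightarrow> peval ?jb F' w = w"
    unfolding FF by (subst peval_diff[OF jb], auto simp: F_jb peval_one[OF jb] intro!: eq_vecI)
  have ann: "peval ?J' (Qe e0 rest) (?g' i0) = 0\<^sub>v ?N'" by (rule IH2, simp add: i0_def)
  have F'_J': "peval ?J' F' (?g' i0) = 0\<^sub>v ?N'"
    unfolding F'_def by (subst peval_mult[OF J' g'], unfold ann, simp add: J')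
  have F_J': "peval ?J' F (?g' i0) = ?g' i0"
  proof -
    have "F = 1 - F'" using FF by simp
    then show ?thesis using F'_J' g'[of i0] by (simp add: peval_diff[OF J' g'] peval_one[OF J' g'] )
  qed
  let ?J = "jordan_matrix (ne # rest)"
  let ?N = "sum_list (map fst (ne # rest))"
  let ?G = "gens (ne # rest)"
  have J: "?J \<in> carrier_mat ?N ?N" by (rule jordan_matrix_carrier)
  have G: "\<And>i. ?G i \<in> carrier_vec ?N" by (rule gens_carrier)
  have u: "?u \<in> carrier_vec n" by simp
  have reach0: "\<exists>x\<in>carrier_vec m. piA ?J ?N m ?G x = 0\<^sub>v n @\<^sub>v y" if y: "y \<in> carrier_vec ?N'" for y
  proof -
    from IH1[OF y] obtain z where z: "z \<in> carrier_vec m" and zy: "piA ?J' ?N' m ?g' z = y" by auto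
    define x where "x = vec m (\<lambda>i. if i = i0 then z $ i * F else z $ i)"
    have x: "x \<in> carrier_vec m" unfolding x_def by simp
    have 1: "vsum n m (\<lambda>i. peval ?jb (x $ i) (h i)) = 0\<^sub>v n"
    proof (rule vsum_zero)
      fix i assume i: "i < m"
      show "peval ?jb (x $ i) (h i) = 0\<^sub>v n"
      proof (cases "i = i0")
        case True
        then have "peval ?jb (x $ i) (h i) = peval ?jb (z $ i) (peval ?jb F ?u)"
          unfolding x_def h_def using i by (simp add: peval_mult[OF jb unit_vec_carrier])
        also have "\<dots> = 0\<^sub>v n" unfolding F_jb[OF u] by simp
        finally show ?thesis .
      next
        case False
        then show ?thesis unfolding h_def by simp
      qed
    qed
    have 2: "piA ?J' ?N' m ?g' x = y" unfolding zy[symmetric] piA_def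
    proof (rule vsum_cong)
      fix i assume i: "i < m"
      show "peval ?J' (x $ i) (?g' i) = peval ?J' (z $ i) (?g' i)"
      proof (cases "i = i0")
        case True
        then show ?thesis unfolding x_def using i by (simp add: peval_mult[OF J' g'] F_J')
      next
        case False
        then show ?thesis unfolding x_def using i by simp
      qed
    qed
    show ?thesis using x by (intro bexI[of _ x], unfold pi 1 2, auto)
  qed
  have reach1: "\<exists>x\<in>carrier_vec m. piA ?J ?N m ?G x = z @\<^sub>v 0\<^sub>v ?N'" if z: "z \<in> carrier_vec n" for z
  proof -
    from block_gen[OF z, of e0] obtain S where S: "peval ?jb S ?u = z" by auto
    define x where "x = vec m (\<lambda>i. if i = i0 then S * F' else 0)"
    have x: "x \<in> carrier_vec m" unfolding x_def by simp
    have 1: "vsum n m (\<lambda>i. peval ?jb (x $ i) (h i)) = z"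
    proof -
      have "vsum n m (\<lambda>i. peval ?jb (x $ i) (h i)) = peval ?jb (x $ i0) (h i0)"
      proof (rule vsum_single[OF i0m])
        show "peval ?jb (x $ i0) (h i0) \<in> carrier_vec n" using h jb by simp
        fix i assume "i < m" "i \<noteq> i0"
        then show "peval ?jb (x $ i) (h i) = 0\<^sub>v n" unfolding x_def h_def by simp
      qed
      also have "\<dots> = peval ?jb S (peval ?jb F' ?u)" unfolding x_def h_def using i0m 
        by (simp add: peval_mult[OF jb unit_vec_carrier])
      also have "\<dots> = z" unfolding F'_jb[OF u] S ..
      finally show ?thesis .
    qed
    have 2: "piA ?J' ?N' m ?g' x = 0\<^sub>v ?N'" unfolding piA_def
    proof (rule vsum_zero)
      fix i assume i: "i < m"
      show "peval ?J' (x $ i) (?g' i) = 0\<^sub>v ?N'"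
      proof (cases "i = i0")
        case True
        then show ?thesis unfolding x_def using i by (simp add: peval_mult[OF J' g'] F'_J' J')
      next
        case False
        then show ?thesis unfolding x_def using i g' by simp
      qed
    qed
    show ?thesis using x by (intro bexI[of _ x], unfold pi 1 2, auto)
  qed
  have part1: "\<forall>w\<in>carrier_vec ?N. \<exists>x\<in>carrier_vec m. piA ?J ?N m ?G x = w"
  proof
    fix w :: "'a vec" assume w: "w \<in> carrier_vec ?N"
    hence w': "w \<in> carrier_vec (n + ?N')" unfolding Neq .
    have w1: "vec_first w n \<in> carrier_vec n" and w2: "vec_last w ?N' \<in> carrier_vec ?N'" by auto
    from reach1[OF w1] obtain x1 where x1: "x1 \<in> carrier_vec m" and p1: "piA ?J ?N m ?G x1 = vec_first w n @\<^sub>v 0\<^sub>v ?N'" by auto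
    from reach0[OF w2] obtain x0 where x0: "x0 \<in> carrier_vec m" and p0: "piA ?J ?N m ?G x0 = 0\<^sub>v n @\<^sub>v vec_last w ?N'" by auto
    have "piA ?J ?N m ?G (x1 + x0) = (vec_first w n @\<^sub>v 0\<^sub>v ?N') + (0\<^sub>v n @\<^sub>v vec_last w ?N')"
      unfolding piA_add[OF J G x1 x0] p1 p0 ..
    also have "\<dots> = (vec_first w n + 0\<^sub>v n) @\<^sub>v (0\<^sub>v ?N' + vec_last w ?N')"
      by (rule append_vec_add[OF w1 zero_carrier_vec zero_carrier_vec w2])
    also have "\<dots> = vec_first w n @\<^sub>v vec_last w ?N'" using w1 w2 by simp
    also have "\<dots> = w" by (rule vec_first_last_append[OF w'])
    finally show "\<exists>x\<in>carrier_vec m. piA ?J ?N m ?G x = w" using x0 x1 by (intro bexI[of _ "x1 + x0"], auto)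
  qed
  have part2: "peval ?J (Qe e (ne # rest)) (?G i) = 0\<^sub>v ?N" if ei: "cnt e (ne # rest) \<le> i" for e i
  proof -
    let ?Qr = "Qe e rest"
    have "cnt e rest \<le> cnt e (ne # rest)" unfolding cnt_def by auto
    hence "peval ?J' ?Qr (?g' i) = 0\<^sub>v ?N'" using ei by (intro IH2, auto)
    hence inner: "peval ?J ?Qr (?G i) = peval ?jb ?Qr (h i) @\<^sub>v 0\<^sub>v ?N'" unfolding pev by simp
    have Qeq: "Qe e (ne # rest) = (if e0 = e then 1 else [:-e0,1:]^n) * ?Qr" unfolding ne Qe_Cons ..
    have "peval ?J (Qe e (ne # rest)) (?G i) = peval ?J (if e0 = e then 1 else [:-e0,1:]^n) (peval ?J ?Qr (?G i))"
      unfolding Qeq by (rule peval_mult[OF J G])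
    also have "\<dots> = 0\<^sub>v ?N"
    proof (cases "e0 = e")
      case True
      with ei have "i \<noteq> i0" unfolding ne cnt_Cons i0_def by auto
      then have "h i = 0\<^sub>v n" unfolding h_def by auto
      then have "peval ?J ?Qr (?G i) = 0\<^sub>v ?N" unfolding inner Neq using jb by (simp add: zero_append_vec)
      then show ?thesis using True J by (simp add: peval_one)
    next
      case False
      have v: "peval ?jb ?Qr (h i) \<in> carrier_vec n" using jb h by simp
      have "peval ?J ([:-e0,1:]^n) (peval ?jb ?Qr (h i) @\<^sub>v 0\<^sub>v ?N') = 
        peval ?jb ([:-e0,1:]^n) (peval ?jb ?Qr (h i)) @\<^sub>v peval ?J' ([:-e0,1:]^n) (0\<^sub>v ?N')"
        unfolding Jeq by (rule peval_block[OF jb J' v], simp)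
      also have "\<dots> = 0\<^sub>v ?N" unfolding peval_nilp[OF v] Neq using J' by (simp add: zero_append_vec)
      finally show ?thesis using False unfolding inner by simp
    qed
    finally show ?thesis .
  qed
  show ?case using part1 part2 by blast
qed



lemma exists_inverse_basis: fixes v :: "'a :: field vec"
  assumes v: "v \<in> carrier_vec n" and v0: "v \<noteq> 0\<^sub>v n"
  shows "\<exists>W X. W \<in> carrier_mat n n \<and> X \<in> carrier_mat n n \<and> W * X = 1\<^sub>m n \<and> X * W = 1\<^sub>m n \<and> 
     (n > 0 \<longrightarrow> col W 0 = v)"
proof -
  interpret V: vec_space "TYPE('a)" n .
  define b where "b = basis_completion v"
  from V.basis_completion[OF v v0, folded b_def]
  have span_b: "V.span (set b) = carrier_vec n" and b: "set b \<subseteq> carrier_vec n" and hdb: "hd b = v" 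
    and len_b: "length b = n" by auto
  define W where "W = mat_of_cols n b"
  have W: "W \<in> carrier_mat n n" unfolding W_def using len_b by auto
  have dimb: "\<forall>w\<in>set b. dim_vec w = n" using b by auto
  have "\<exists>x. x \<in> carrier_vec n \<and> W *\<^sub>v x = unit_vec n j" for j
  proof -
    have "unit_vec n j \<in> V.span (set b)" unfolding span_b by simp
    hence "unit_vec n j \<in> V.span_list b" unfolding V.span_list_as_span[OF b] .
    then obtain c where "unit_vec n j = V.lincomb_list c b" by (metis V.in_span_listE)
    also have "\<dots> = W *\<^sub>v vec (length b) c" unfolding W_def by (rule V.lincomb_list_as_mat_mult[OF dimb])
    finally show ?thesis using len_b by (intro exI[of _ "vec (length b) c"], auto)
  qed
  then obtain x where x: "\<And>j. x j \<in> carrier_vec n" and Wx: "\<And>j. W *\<^sub>v x j = unit_vec n j" by metis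
  define X where "X = mat n n (\<lambda>(i,j). x j $ i)"
  have X: "X \<in> carrier_mat n n" unfolding X_def by auto
  have colX: "col X j = x j" if j: "j < n" for j
  proof -
    have d: "dim_vec (x j) = n" using x[of j] by (rule carrier_vecD)
    show ?thesis unfolding X_def using j d by (intro eq_vecI, auto)
  qed
  have WX: "W * X = 1\<^sub>m n"
  proof (rule eq_matI)
    fix i j assume i: "i < dim_row (1\<^sub>m n :: 'a mat)" and j: "j < dim_col (1\<^sub>m n :: 'a mat)"
    hence ij: "i < n" "j < n" by auto
    have "(W * X) $$ (i,j) = row W i \<bullet> col X j" using W X ij by simp
    also have "\<dots> = (W *\<^sub>v x j) $ i" using W ij colX by simp
    also have "\<dots> = 1\<^sub>m n $$ (i,j)" unfolding Wx using ij by simp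
    finally show "(W * X) $$ (i,j) = 1\<^sub>m n $$ (i,j)" .
  qed (insert W X, auto)
  have XW: "X * W = 1\<^sub>m n" by (rule mat_mult_left_right_inverse[OF W X WX])
  have "n > 0 \<longrightarrow> col W 0 = v"
  proof
    assume n: "n > 0"
    then obtain b' where bb: "b = v # b'" using hdb len_b by (cases b, auto)
    show "col W 0 = v" unfolding W_def bb using n v b len_b bb 
      by (subst col_mat_of_cols, auto)
  qed
  then show ?thesis using W X WX XW by blast
qed


lemma triangularize: fixes A :: "'a :: alg_closed_field mat"
  assumes "A \<in> carrier_mat n n"
  shows "\<exists>B. B \<in> carrier_mat n n \<and> upper_triangular B \<and> similar_mat A B"
  using assms
proof (induct n arbitrary: A)
  case 0
  then show ?case by (intro exI[of _ A], auto intro: similar_mat_refl)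
next
  case (Suc k A)
  let ?n = "Suc k"
  have A: "A \<in> carrier_mat ?n ?n" by fact
  have "degree (char_poly A) = ?n" using degree_monic_char_poly[OF A] by auto
  then obtain e where "poly (char_poly A) e = 0" using alg_closed_imp_poly_has_root[of "char_poly A"] by auto
  hence ev: "eigenvalue A e" unfolding eigenvalue_root_char_poly[OF A] .
  define v where "v = find_eigenvector A e"
  from find_eigenvector[OF A ev, folded v_def] have "eigenvector A v e" .
  hence v: "v \<in> carrier_vec ?n" and v0: "v \<noteq> 0\<^sub>v ?n" and Av: "A *\<^sub>v v = e \<cdot>\<^sub>v v"
    unfolding eigenvector_def using A by auto
  from exists_inverse_basis[OF v v0] obtain W X where W: "W \<in> carrier_mat ?n ?n" and X: "X \<in> carrier_mat ?n ?n"
    and WX: "W * X = 1\<^sub>m ?n" and XW: "X * W = 1\<^sub>m ?n" and colW: "col W 0 = v" by auto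
  define A' where "A' = X * A * W"
  have A': "A' \<in> carrier_mat ?n ?n" unfolding A'_def using X A W by auto
  have simAA': "similar_mat_wit A A' W X"
  proof (rule similar_mat_witI[OF WX XW _ A A' W X])
    have "W * A' * X = (W * X) * A * (W * X)" unfolding A'_def using W X A 
      by (simp add: assoc_mult_mat[of _ ?n ?n _ ?n _ ?n])
    then show "A = W * A' * X" unfolding WX using A by simp
  qed
  have col0: "A' $$ (i, 0) = (if i = 0 then e else 0)" if i: "i < ?n" for i
  proof -
    have "W *\<^sub>v unit_vec ?n 0 = col W 0" using W by (intro eq_vecI, auto simp: scalar_prod_right_unit)
    hence Wu: "W *\<^sub>v unit_vec ?n 0 = v" unfolding colW .
    have "X *\<^sub>v v = unit_vec ?n 0" unfolding Wu[symmetric] 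
      using assoc_mult_mat_vec[OF X W, of "unit_vec ?n 0"] XW by simp
    have "A' *\<^sub>v unit_vec ?n 0 = X *\<^sub>v (A *\<^sub>v (W *\<^sub>v unit_vec ?n 0))"
      unfolding A'_def using X A W by (simp add: assoc_mult_mat_vec[of _ ?n ?n _ ?n])
    also have "\<dots> = X *\<^sub>v (e \<cdot>\<^sub>v v)" unfolding Wu Av ..
    also have "\<dots> = e \<cdot>\<^sub>v (X *\<^sub>v v)" by (rule mmv_smult[OF X v])
    also have "X *\<^sub>v v = unit_vec ?n 0" by fact
    finally have "A' *\<^sub>v unit_vec ?n 0 = e \<cdot>\<^sub>v unit_vec ?n 0" .
    hence "(A' *\<^sub>v unit_vec ?n 0) $ i = (e \<cdot>\<^sub>v unit_vec ?n 0) $ i" by simp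
    then show ?thesis using i A' by (auto simp: scalar_prod_right_unit)
  qed
  obtain A1 A2 A0 A3 where splitA': "split_block A' 1 1 = (A1,A2,A0,A3)"
    by (cases "split_block A' 1 1", auto)
  from A' have "dim_row A' = 1 + k" "dim_col A' = 1 + k" by auto
  from split_block[OF splitA' this] have A2: "A2 \<in> carrier_mat 1 k"
    and A3: "A3 \<in> carrier_mat k k" and A'block: "A' = four_block_mat A1 A2 A0 A3" 
    and A1: "A1 \<in> carrier_mat 1 1" and A0: "A0 \<in> carrier_mat k 1" by auto
  have A0id: "A0 = 0\<^sub>m k 1"
    using splitA'[unfolded split_block_def Let_def] col0 A' by auto
  have A1id: "A1 = mat 1 1 (\<lambda> _. e)"
    using splitA'[unfolded split_block_def Let_def] col0 A' by auto
  from Suc(1)[OF A3] obtain B where B: "B \<in> carrier_mat k k" and ut: "upper_triangular B" 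
    and simB: "similar_mat A3 B" by auto
  from simB obtain P' Q' where simIH: "similar_mat_wit A3 B P' Q'" unfolding similar_mat_def by auto
  from similar_mat_witD2[OF A3 simIH] 
  have P': "P' \<in> carrier_mat k k" and Q': "Q' \<in> carrier_mat k k" 
    and PQ': "P' * Q' = 1\<^sub>m k" by auto
  define C where "C = four_block_mat A1 (A2 * P') A0 B"
  have A0_eq: "A0 = P' * A0 * 1\<^sub>m 1" unfolding A0id using P' by auto
  have simA'C: "similar_mat_wit A' C (four_block_mat (1\<^sub>m 1) (0\<^sub>m 1 k) (0\<^sub>m k 1) P') (four_block_mat (1\<^sub>m 1) (0\<^sub>m 1 k) (0\<^sub>m k 1) Q')" 
    unfolding A'block C_def
    by (rule similar_mat_wit_four_block[OF similar_mat_wit_refl[OF A1] simIH _ A0_eq A1 A3 A0],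
    insert PQ' A2 P' Q', auto)
  have ut1: "upper_triangular A1" unfolding A1id by auto
  have utC: "upper_triangular C" unfolding C_def A0id
    by (intro upper_triangular_four_block[OF _ B ut1 ut], auto simp: A1id)
  have C: "C \<in> carrier_mat ?n ?n" unfolding C_def using A1 A2 P' B by auto
  have "similar_mat A C" using similar_mat_wit_trans[OF simAA' simA'C] unfolding similar_mat_def by blast
  then show ?case using C utC by blast
qed

lemma jnf_exists: fixes A :: "'a :: alg_closed_field mat"
  assumes A: "A \<in> carrier_mat n n"
  shows "\<exists>n_as. jordan_nf A n_as"
proof -
  from triangularize[OF A] obtain B where B: "B \<in> carrier_mat n n" and ut: "upper_triangular B" 
    and AB: "similar_mat A B" by auto
  from triangular_to_jnf_vector[OF B ut] have "jordan_nf B (triangular_to_jnf_vector B)" .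
  with similar_mat_trans[OF AB] show ?thesis unfolding jordan_nf_def by blast
qed



lemma poly_prod_jordan: fixes e :: "'a :: comm_ring_1" shows "poly (\<Prod>(n,a)\<leftarrow>l. [:-a,1:]^n) e = (\<Prod>(n,a)\<leftarrow>l. (e - a)^n)"
proof (induct l)
  case (Cons x l)
  then show ?case by (cases x, simp add: uminus_add_conv_diff)
qed simp

lemma cnt_le_max: fixes A :: "'a :: field mat"
  assumes A: "A \<in> carrier_mat n n" and jnf: "jordan_nf A n_as"
    and m: "m = Max ((\<lambda>e. kernel_dim (char_matrix A e)) ` {e. eigenvalue A e})"
  shows "cnt e n_as \<le> m"
proof (cases "cnt e n_as = 0")
  case False
  from jnf have n0: "0 \<notin> fst ` set n_as" unfolding jordan_nf_def by auto
  have "dim_gen_eigenspace A e 1 = (\<Sum> k \<leftarrow> map fst [(k, a)\<leftarrow>n_as . a = e]. min 1 k)"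
    by (rule dim_gen_eigenspace[OF jnf])
  also have "\<dots> = cnt e n_as" using n0 unfolding cnt_def
  proof (induct n_as)
    case (Cons ka l)
    obtain k a where ka: "ka = (k,a)" by force
    from Cons(2) have k: "k \<noteq> 0" and l: "0 \<notin> fst ` set l" unfolding ka by auto
    from Cons(1)[OF l] show ?case unfolding ka using k by auto
  qed simp
  finally have dge: "dim_gen_eigenspace A e 1 = cnt e n_as" .
  have "char_matrix A e ^\<^sub>m 1 = char_matrix A e" using A by simp
  hence kd: "kernel_dim (char_matrix A e) = cnt e n_as" using dge unfolding dim_gen_eigenspace_def by simp
  from False have "filter (\<lambda>(k,u). u = e) n_as \<noteq> []" unfolding cnt_def by auto
  then obtain x where x: "x \<in> set n_as" and xe: "(\<lambda>(k,u). u = e) x" unfolding filter_empty_conv by blast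
  obtain k where mem: "(k,e) \<in> set n_as" using x xe by (cases x, auto)
  have "k \<in> fst ` set n_as" using mem by (metis fst_conv image_eqI)
  with n0 have k: "k \<noteq> 0" by metis
  have "poly (char_poly A) e = (\<Prod> (k,a) \<leftarrow> n_as. (e - a) ^ k)"
    unfolding jordan_nf_char_poly[OF jnf] by (rule poly_prod_jordan)
  also have "\<dots> = 0" 
  proof -
    have "0 \<in> set (map (\<lambda>(k,a). (e - a) ^ k) n_as)" using mem k by force
    then show ?thesis by (subst prod_list_zero_iff)
  qed
  finally have ev: "eigenvalue A e" unfolding eigenvalue_root_char_poly[OF A] .
  have fin: "finite {e. eigenvalue A e}"
  proof -
    have "lead_coeff (char_poly A) = 1" using degree_monic_char_poly[OF A] by blast
    then have "char_poly A \<noteq> 0" by (metis leading_coeff_0_iff one_neq_zero)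
    then have "finite {x. poly (char_poly A) x = 0}" by (rule poly_roots_finite)
    then show ?thesis unfolding eigenvalue_root_char_poly[OF A] .
  qed
  have "kernel_dim (char_matrix A e) \<le> m" unfolding m 
    by (rule Max_ge[OF finite_imageI[OF fin] imageI], simp add: ev)
  then show ?thesis unfolding kd .
qed simp

theorem corollary5p3:
  fixes A :: "'a::alg_closed_field mat" and n m :: nat
  assumes "A \<in> carrier_mat n n"
    and "m = Max ((\<lambda>e. kernel_dim (char_matrix A e)) ` {e. eigenvalue A e})"
  shows "\<forall>f :: 'a ncpoly.
           is_PI m (\<lambda>c. [:c:]) (carrier_mat m m :: 'a poly mat set) f
           \<longrightarrow> is_PI n (\<lambda>c. c) (centralizer n A) f"
proof (intro allI impI)
  fix f :: "'a ncpoly"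
  assume PI: "is_PI m (\<lambda>c. [:c:]) (carrier_mat m m :: 'a poly mat set) f"
  have A: "A \<in> carrier_mat n n" by fact
  from jnf_exists[OF A] obtain n_as where jnf: "jordan_nf A n_as" by auto
  let ?J = "jordan_matrix n_as"
  from jnf have n0: "0 \<notin> fst ` set n_as" and sim: "similar_mat A ?J" unfolding jordan_nf_def by auto
  from sim obtain P Q where wit: "similar_mat_wit A ?J P Q" unfolding similar_mat_def by auto
  note D = similar_mat_witD2[OF A wit]
  have J: "?J \<in> carrier_mat n n" by (rule D(5))
  have P: "P \<in> carrier_mat n n" by (rule D(6))
  have Q: "Q \<in> carrier_mat n n" by (rule D(7))
  have PQ: "P * Q = 1\<^sub>m n" by (rule D(1))
  have QP: "Q * P = 1\<^sub>m n" by (rule D(2))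
  have AJ: "A = P * ?J * Q" by (rule D(3))
  have "dim_row ?J = sum_list (map fst n_as)" by simp
  moreover have "dim_row ?J = n" using J by (rule carrier_matD)
  ultimately have N: "sum_list (map fst n_as) = n" by simp
  have cnt: "\<And>e. cnt e n_as \<le> m" by (rule cnt_le_max[OF A jnf assms(2)])
  from gen_main[OF n0 cnt, unfolded N] have 
    gen: "\<And>w. w \<in> carrier_vec n \<Longrightarrow> \<exists>x\<in>carrier_vec m. piA ?J n m (gens n_as) x = w" by auto
  have gc: "\<And>i. gens n_as i \<in> carrier_vec n" using gens_carrier[of n_as] unfolding N .
  define g where "g = (\<lambda>i. P *\<^sub>v gens n_as i)"
  have g: "\<And>i. i < m \<Longrightarrow> g i \<in> carrier_vec n" unfolding g_def using P gc by auto
  have AP: "A * P = P * ?J"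
  proof -
    have "A * P = P * ?J * (Q * P)" unfolding AJ using P J Q by (simp add: assoc_mult_mat[of _ n n _ n _ n])
    moreover have "P * ?J \<in> carrier_mat n n" using P J by simp
    ultimately show ?thesis unfolding QP by (simp add: right_mult_one_mat)
  qed
  have piPJ: "piA A n m g x = P *\<^sub>v piA ?J n m (gens n_as) x" for x
  proof -
    have "P *\<^sub>v piA ?J n m (gens n_as) x = vsum n m (\<lambda>i. P *\<^sub>v peval ?J (x $ i) (gens n_as i))"
      unfolding piA_def by (rule vsum_mult[OF P], insert J gc, auto)
    also have "\<dots> = piA A n m g x" unfolding piA_def g_def
      by (rule vsum_cong, rule peval_sim[OF A J P gc AP, symmetric])
    finally show ?thesis by simp
  qed
  have genA: "\<exists>x\<in>carrier_vec m. piA A n m g x = w" if w: "w \<in> carrier_vec n" for w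
  proof -
    have "Q *\<^sub>v w \<in> carrier_vec n" using Q w by auto
    from gen[OF this] obtain x where x: "x \<in> carrier_vec m" and px: "piA ?J n m (gens n_as) x = Q *\<^sub>v w" by auto
    have "piA A n m g x = P *\<^sub>v (Q *\<^sub>v w)" unfolding piPJ px ..
    also have "\<dots> = w" using assoc_mult_mat_vec[OF P Q w] PQ w by simp
    finally show ?thesis using x by auto
  qed
  show "is_PI n (\<lambda>c. c) (centralizer n A) f"
  proof (rule PI_transfer[OF _ _ _ _ _ _ _ PI])
    show "centralizer n A \<subseteq> carrier_mat n n" unfolding centralizer_def by auto
    show "\<And>x. piA A n m g x \<in> carrier_vec n" by (rule piA_carrier[OF A g])
    show "\<And>x y. x \<in> carrier_vec m \<Longrightarrow> y \<in> carrier_vec m \<Longrightarrow> piA A n m g (x + y) = piA A n m g x + piA A n m g y"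
      by (rule piA_add[OF A g])
    show "\<And>x y. x \<in> carrier_vec m \<Longrightarrow> y \<in> carrier_vec m \<Longrightarrow> piA A n m g (x - y) = piA A n m g x - piA A n m g y"
      by (rule piA_sub[OF A g])
    show "\<And>x k. x \<in> carrier_vec m \<Longrightarrow> piA A n m g ([:k:] \<cdot>\<^sub>v x) = k \<cdot>\<^sub>v piA A n m g x"
      by (rule piA_sm[OF A g])
    show "\<And>w. w \<in> carrier_vec n \<Longrightarrow> \<exists>x\<in>carrier_vec m. piA A n m g x = w" by (rule genA)
    show "\<And>\<psi>. \<psi> \<in> centralizer n A \<Longrightarrow> \<exists>G\<in>carrier_mat m m. \<forall>x\<in>carrier_vec m. piA A n m g (G *\<^sub>v x) = \<psi> *\<^sub>v piA A n m g x"
      by (rule piA_lift[OF A g genA])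
  qed
qed


end
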